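(* Let $R_0^*\in SO(3)$ with unit quaternion representation $w_0^*\in\mathbb{S}^3$, let $x_1,\dots,x_\ell\in\mathbb{R}^3$, $y_i=R_0^*x_i$ for all $i=1,\dots,\ell$ (no noise and no outliers), and $c_1^2,\dots,c_\ell^2\ge0$. Let $\omega^*=[w_0^*;\dots;w_0^*]\in\mathbb{R}^{4(\ell+1)}$ ($w_0^*$ repeated $\ell+1$ times). Then $\omega^*$ is a global minimizer of (QCQP) and $\omega^*(\omega^* )^\top$ globally minimizes (SDR); in particular (SDR) is tight.
   Context: For $w=[w_1;w_2;w_3;w_4]\in\mathbb{S}^3$, $R(w)=\begin{bmatrix} w_1^2+w_2^2-w_3^2-w_4^2 & 2(w_2w_3-w_1w_4) & 2(w_2w_4+w_1w_3)\\ 2(w_2w_3+w_1w_4) & w_1^2+w_3^2-w_2^2-w_4^2 & 2(w_3w_4-w_1w_2)\\ 2(w_2w_4-w_1w_3) & 2(w_3w_4+w_1w_2) & w_1^2+w_4^2-w_2^2-w_3^2\end{bmatrix}\in SO(3)$; $w$ and $-w$ are the unit quaternion representations of $R(w)$. $Q_i$ is the unique symmetric $4\times4$ matrix with $w^\top Q_iw=\|y_i-R(w)x_i\|_2^2$ for all $w\in\mathbb{S}^3$. For $\mathcal{A}\in\mathbb{R}^{4(\ell+1)\times4(\ell+1)}$, $[\mathcal{A}]_{ij}$ ($0\le i,j\le\ell$) is the $4\times4$ block in rows $4i+1..4i+4$, columns $4j+1..4j+4$. $\mathcal{Q}$ is symmetric with $[\mathcal{Q}]_{0i}=[\mathcal{Q}]_{i0}=\frac12(Q_i-c_i^2I_4)$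 ($i\ge1$), other blocks zero. (QCQP): minimize $\operatorname{tr}(\mathcal{Q}\omega\omega^\top)+\sum_ic_i^2$ over $\omega\in\mathbb{R}^{4(\ell+1)}$ s.t. $[\omega\omega^\top]_{0i}=[\omega\omega^\top]_{ii}$ ($i=1..\ell$), $\operatorname{tr}([\omega\omega^\top]_{00})=1$. (SDR): minimize $\operatorname{tr}(\mathcal{Q}\mathcal{W})+\sum_ic_i^2$ over symmetric $\mathcal{W}\succeq0$ s.t. $[\mathcal{W}]_{0i}=[\mathcal{W}]_{ii}$ ($i=1..\ell$), $\operatorname{tr}([\mathcal{W}]_{00})=1$. (SDR) is tight if it admits $\hat\omega\hat\omega^\top$ as a global minimizer, where $\hat\omega$ is a global minimizer of (QCQP). *)

theory Defs
  imports "HOL-Analysis.Analysis"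
begin

definition Rq :: "real^4 \<Rightarrow> real^3^3" where
  "Rq w = (let w1 = w$1; w2 = w$2; w3 = w$3; w4 = w$4 in
     vector [
       vector [w1^2+w2^2-w3^2-w4^2, 2*(w2*w3-w1*w4), 2*(w2*w4+w1*w3)],
       vector [2*(w2*w3+w1*w4), w1^2+w3^2-w2^2-w4^2, 2*(w3*w4-w1*w2)],
       vector [2*(w2*w4-w1*w3), 2*(w3*w4+w1*w2), w1^2+w4^2-w2^2-w3^2]])"

definition Qmat :: "real^3 \<Rightarrow> real^3 \<Rightarrow> real^4^4" where
  "Qmat x y = (THE Q. transpose Q = Q \<and>
       (\<forall>w::real^4. norm w = 1 \<longrightarrow> w \<bullet> (Q *v w) = (norm (y - Rq w *v x))^2))"

definition idx4 :: "nat \<Rightarrow> 4" where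
  "idx4 a = (if a = 0 then 1 else if a = 1 then 2 else if a = 2 then 3 else 4)"

text \<open>Matrices in R^{4(l+1) x 4(l+1)} are represented by nat \<Rightarrow> nat \<Rightarrow> real
  (0-based indices below N = 4(l+1)), vectors by nat \<Rightarrow> real.
  Block [A]_{ij} occupies rows 4i..4i+3 and columns 4j..4j+3 (0-based).\<close>

definition bigQ :: "nat \<Rightarrow> (nat \<Rightarrow> real^4^4) \<Rightarrow> (nat \<Rightarrow> real) \<Rightarrow> nat \<Rightarrow> nat \<Rightarrow> real" where
  "bigQ l Q csq p q =
     (let bi = p div 4; bj = q div 4; a = p mod 4; b = q mod 4 in
      if bi = 0 \<and> 1 \<le> bj \<and> bj \<le> l then
        (Q bj $ idx4 a $ idx4 b - (if a = b then csq bj else 0)) / 2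
      else if bj = 0 \<and> 1 \<le> bi \<and> bi \<le> l then
        (Q bi $ idx4 a $ idx4 b - (if a = b then csq bi else 0)) / 2
      else 0)"

definition gram :: "(nat \<Rightarrow> real) \<Rightarrow> nat \<Rightarrow> nat \<Rightarrow> real" where
  "gram v = (\<lambda>p q. v p * v q)"

definition trprod :: "nat \<Rightarrow> (nat \<Rightarrow> nat \<Rightarrow> real) \<Rightarrow> (nat \<Rightarrow> nat \<Rightarrow> real) \<Rightarrow> real" where
  "trprod l A W = (\<Sum>p<4*(l+1). \<Sum>q<4*(l+1). A p q * W q p)"

definition constr :: "nat \<Rightarrow> (nat \<Rightarrow> nat \<Rightarrow> real) \<Rightarrow> bool" where
  "constr l W \<longleftrightarrow>
     (\<forall>i\<in>{1..l}. \<forall>a<4. \<forall>b<4. W a (4*i+b) = W (4*i+a) (4*i+b)) \<and>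
     (\<Sum>a<4. W a a) = 1"

definition objective :: "nat \<Rightarrow> (nat \<Rightarrow> real^4^4) \<Rightarrow> (nat \<Rightarrow> real) \<Rightarrow> (nat \<Rightarrow> nat \<Rightarrow> real) \<Rightarrow> real" where
  "objective l Q csq W = trprod l (bigQ l Q csq) W + (\<Sum>i\<in>{1..l}. csq i)"

definition sym_psd :: "nat \<Rightarrow> (nat \<Rightarrow> nat \<Rightarrow> real) \<Rightarrow> bool" where
  "sym_psd l W \<longleftrightarrow>
     (\<forall>p<4*(l+1). \<forall>q<4*(l+1). W p q = W q p) \<and>
     (\<forall>v::nat \<Rightarrow> real. (\<Sum>p<4*(l+1). \<Sum>q<4*(l+1). v p * W p q * v q) \<ge> 0)"

definition qcqp_global_min :: "nat \<Rightarrow> (nat \<Rightarrow> real^4^4) \<Rightarrow> (nat \<Rightarrow> real) \<Rightarrow> (nat \<Rightarrow> real) \<Rightarrow> bool" where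
  "qcqp_global_min l Q csq \<omega> \<longleftrightarrow>
     constr l (gram \<omega>) \<and>
     (\<forall>\<omega>'. constr l (gram \<omega>') \<longrightarrow> objective l Q csq (gram \<omega>) \<le> objective l Q csq (gram \<omega>'))"

definition sdr_global_min :: "nat \<Rightarrow> (nat \<Rightarrow> real^4^4) \<Rightarrow> (nat \<Rightarrow> real) \<Rightarrow> (nat \<Rightarrow> nat \<Rightarrow> real) \<Rightarrow> bool" where
  "sdr_global_min l Q csq W \<longleftrightarrow>
     sym_psd l W \<and> constr l W \<and>
     (\<forall>W'. sym_psd l W' \<and> constr l W' \<longrightarrow> objective l Q csq W \<le> objective l Q csq W')"

definition sdr_tight :: "nat \<Rightarrow> (nat \<Rightarrow> real^4^4) \<Rightarrow> (nat \<Rightarrow> real) \<Rightarrow> bool" where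
  "sdr_tight l Q csq \<longleftrightarrow> (\<exists>\<omega>. qcqp_global_min l Q csq \<omega> \<and> sdr_global_min l Q csq (gram \<omega>))"

definition rep_quat :: "nat \<Rightarrow> real^4 \<Rightarrow> nat \<Rightarrow> real" where
  "rep_quat l w p = (if p < 4*(l+1) then w $ idx4 (p mod 4) else 0)"

end

theory Submission
  imports Defs
begin

definition Lm :: "real^3 \<Rightarrow> real^3 \<Rightarrow> real^4^4" where
  "Lm x y = (\<chi> k j.
     if k = 1 then (if j = 1 then 0 else if j = 2 then -(y$1-x$1) else if j = 3 then -(y$2-x$2) else -(y$3-x$3))
     else if k = 2 then (if j = 1 then y$1-x$1 else if j = 2 then 0 else if j = 3 then -(y$3+x$3) else y$2+x$2)
     else if k = 3 then (if j = 1 then y$2-x$2 else if j = 2 then y$3+x$3 else if j = 3 then 0 else -(y$1+x$1))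
     else (if j = 1 then y$3-x$3 else if j = 2 then -(y$2+x$2) else if j = 3 then y$1+x$1 else 0))"

definition Qe :: "real^3 \<Rightarrow> real^3 \<Rightarrow> real^4^4" where
  "Qe x y = transpose (Lm x y) ** Lm x y"

lemma Qe_sym: "transpose (Qe x y) = Qe x y"
  unfolding Qe_def by (simp add: matrix_transpose_mul)

lemma Qe_form: "w \<bullet> (Qe x y *v w) = (norm (Lm x y *v w))^2"
proof -
  have "Qe x y *v w = (Lm x y *v w) v* Lm x y"
    unfolding Qe_def by (simp flip: matrix_vector_mul_assoc)
  then show ?thesis
    by (metis power2_norm_eq_inner inner_commute dot_lmul_matrix)
qed

lemma sph:
  fixes w1 w2 w3 w4 x1 x2 x3 y1 y2 y3 :: real
  assumes "w1^2+w2^2+w3^2+w4^2 = 1"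
  shows "(y1 - ((w1^2+w2^2-w3^2-w4^2)*x1 + 2*(w2*w3-w1*w4)*x2 + 2*(w2*w4+w1*w3)*x3))^2
       + (y2 - (2*(w2*w3+w1*w4)*x1 + (w1^2+w3^2-w2^2-w4^2)*x2 + 2*(w3*w4-w1*w2)*x3))^2
       + (y3 - (2*(w2*w4-w1*w3)*x1 + 2*(w3*w4+w1*w2)*x2 + (w1^2+w4^2-w2^2-w3^2)*x3))^2
     = (-(y1-x1)*w2 - (y2-x2)*w3 - (y3-x3)*w4)^2
     + ((y1-x1)*w1 - (y3+x3)*w3 + (y2+x2)*w4)^2
     + ((y2-x2)*w1 + (y3+x3)*w2 - (y1+x1)*w4)^2
     + ((y3-x3)*w1 - (y2+x2)*w2 + (y1+x1)*w3)^2"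
proof -
  let ?s = "w1^2+w2^2+w3^2+w4^2"
  have e1: "(y1 - ((w1^2+w2^2-w3^2-w4^2)*x1 + 2*(w2*w3-w1*w4)*x2 + 2*(w2*w4+w1*w3)*x3))^2
       + (y2 - (2*(w2*w3+w1*w4)*x1 + (w1^2+w3^2-w2^2-w4^2)*x2 + 2*(w3*w4-w1*w2)*x3))^2
       + (y3 - (2*(w2*w4-w1*w3)*x1 + 2*(w3*w4+w1*w2)*x2 + (w1^2+w4^2-w2^2-w3^2)*x3))^2
     = (y1^2+y2^2+y3^2) + ?s^2 * (x1^2+x2^2+x3^2)
       - 2*(y1*((w1^2+w2^2-w3^2-w4^2)*x1 + 2*(w2*w3-w1*w4)*x2 + 2*(w2*w4+w1*w3)*x3)
          + y2*(2*(w2*w3+w1*w4)*x1 + (w1^2+w3^2-w2^2-w4^2)*x2 + 2*(w3*w4-w1*w2)*x3)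
          + y3*(2*(w2*w4-w1*w3)*x1 + 2*(w3*w4+w1*w2)*x2 + (w1^2+w4^2-w2^2-w3^2)*x3))"
    by algebra
  have e2: "(-(y1-x1)*w2 - (y2-x2)*w3 - (y3-x3)*w4)^2
     + ((y1-x1)*w1 - (y3+x3)*w3 + (y2+x2)*w4)^2
     + ((y2-x2)*w1 + (y3+x3)*w2 - (y1+x1)*w4)^2
     + ((y3-x3)*w1 - (y2+x2)*w2 + (y1+x1)*w3)^2
     = ?s * (y1^2+y2^2+y3^2) + ?s * (x1^2+x2^2+x3^2)
       - 2*(y1*((w1^2+w2^2-w3^2-w4^2)*x1 + 2*(w2*w3-w1*w4)*x2 + 2*(w2*w4+w1*w3)*x3)
          + y2*(2*(w2*w3+w1*w4)*x1 + (w1^2+w3^2-w2^2-w4^2)*x2 + 2*(w3*w4-w1*w2)*x3)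
          + y3*(2*(w2*w4-w1*w3)*x1 + 2*(w3*w4+w1*w2)*x2 + (w1^2+w4^2-w2^2-w3^2)*x3))"
    by algebra
  show ?thesis unfolding e1 e2 assms by simp
qed

lemma norm_sq3: "(norm (v::real^3))^2 = (v$1)^2 + (v$2)^2 + (v$3)^2"
  unfolding power2_norm_eq_inner inner_vec_def sum_3 by (simp add: power2_eq_square)

lemma norm_sq4: "(norm (v::real^4))^2 = (v$1)^2 + (v$2)^2 + (v$3)^2 + (v$4)^2"
  unfolding power2_norm_eq_inner inner_vec_def sum_4 by (simp add: power2_eq_square)

lemma sphere_eq:
  assumes "norm w = 1"
  shows "(norm (y - Rq w *v x))^2 = (norm (Lm x y *v w))^2"
proof -
  have h: "(w$1)^2 + (w$2)^2 + (w$3)^2 + (w$4)^2 = 1"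
    using assms norm_sq4[of w] by simp
  show ?thesis
    unfolding norm_sq3 norm_sq4
    apply (simp add: Rq_def Lm_def matrix_vector_mult_def sum_3 sum_4 Let_def)
    using sph[OF h, of "y$1" "x$1" "x$2" "x$3" "y$2" "y$3"]
    by (simp add: algebra_simps)
qed

lemma Qe_prop: "norm w = 1 \<Longrightarrow> w \<bullet> (Qe x y *v w) = (norm (y - Rq w *v x))^2"
  using Qe_form sphere_eq by simp

lemma quad_zero:
  fixes D :: "real^4^4"
  assumes sym: "transpose D = D" and z: "\<And>w. norm w = 1 \<Longrightarrow> w \<bullet> (D *v w) = 0"
  shows "D = 0"
proof -
  have z2: "w \<bullet> (D *v w) = 0" for w
  proof (cases "w = 0")
    case True then show ?thesis by simp
  next
    case False
    let ?u = "(1 / norm w) *\<^sub>R w"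
    have "norm ?u = 1" using False by simp
    then have "?u \<bullet> (D *v ?u) = 0" by (rule z)
    then have "(1 / norm w)^2 * (w \<bullet> (D *v w)) = 0"
      by (simp add: matrix_vector_mult_scaleR power2_eq_square)
    then show ?thesis using False by simp
  qed
  have bil: "a \<bullet> (D *v b) = 0" for a b
  proof -
    have s: "b \<bullet> (D *v a) = a \<bullet> (D *v b)"
    proof -
      have "b \<bullet> (D *v a) = (b v* D) \<bullet> a" by (simp add: dot_lmul_matrix)
      also have "b v* D = transpose D *v b" by simp
      also have "\<dots> = D *v b" using sym by simp
      finally show ?thesis by (simp add: inner_commute)
    qed
    have "0 = (a + b) \<bullet> (D *v (a + b))" using z2 by simp
    also have "\<dots> = a \<bullet> (D *v a) + a \<bullet> (D *v b) + b \<bullet> (D *v a) + b \<bullet> (D *v b)"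
      by (simp add: matrix_vector_right_distrib inner_add_left inner_add_right)
    finally show ?thesis using z2[of a] z2[of b] s by simp
  qed
  show ?thesis
    unfolding vec_eq_iff
  proof (intro allI)
    fix i j
    have "(D *v axis j 1) $ i = D $ i $ j"
      by (simp add: matrix_vector_mult_def axis_def if_distrib cong: if_cong)
    then have "axis i 1 \<bullet> (D *v axis j 1) = D $ i $ j"
      by (simp add: inner_axis')
    then show "D $ i $ j = 0 $ i $ j" using bil by simp
  qed
qed

lemma Qmat_eq: "Qmat x y = Qe x y"
  unfolding Qmat_def
proof (rule the_equality)
  show "transpose (Qe x y) = Qe x y \<and> (\<forall>w::real^4. norm w = 1 \<longrightarrow> w \<bullet> (Qe x y *v w) = (norm (y - Rq w *v x))^2)"
    using Qe_sym Qe_prop by blast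
next
  fix Q assume a: "transpose Q = Q \<and> (\<forall>w::real^4. norm w = 1 \<longrightarrow> w \<bullet> (Q *v w) = (norm (y - Rq w *v x))^2)"
  have "Q - Qe x y = 0"
  proof (rule quad_zero)
    show "transpose (Q - Qe x y) = Q - Qe x y"
      using a Qe_sym by (metis (no_types, lifting) transpose_def vec_eq_iff vec_lambda_beta vector_minus_component)
    fix w :: "real^4" assume "norm w = 1"
    then show "w \<bullet> ((Q - Qe x y) *v w) = 0"
      using a Qe_prop[of w x y] by (simp add: matrix_vector_mult_diff_rdistrib inner_diff_right)
  qed
  then show "Q = Qe x y" by simp
qed

lemma sum_blocks: "(\<Sum>p<4*n. f p) = (\<Sum>i<n. \<Sum>a<4. f (4*i+a :: nat)) " for f :: "nat \<Rightarrow> real"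
proof (induction n)
  case 0 then show ?case by simp
next
  case (Suc n)
  have e: "4 * Suc n = Suc (Suc (Suc (Suc (4*n))))" by simp
  have f4: "(\<Sum>a<4. g (a::nat)) = g 0 + g 1 + g 2 + g 3" for g :: "nat \<Rightarrow> real"
    by (simp add: numeral_eq_Suc lessThan_Suc)
  show ?case unfolding e using Suc by (simp add: f4 lessThan_Suc add.commute add.left_commute eval_nat_numeral)
qed

lemma sum_blocks2: "(\<Sum>p<4*n. \<Sum>q<4*n. h p q) =
   (\<Sum>i<n. \<Sum>j<n. \<Sum>a<4. \<Sum>b<4. h (4*i+a :: nat) (4*j+b :: nat))" for h :: "nat \<Rightarrow> nat \<Rightarrow> real"
  unfolding sum_blocks by (simp add: sum.swap[of _ "{..<4::nat}" "{..<n}"])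

lemma bigQ_val:
  assumes "a < 4" "b < 4"
  shows "bigQ l Q csq (4*i+a) (4*j+b) =
    (if i = 0 \<and> 1 \<le> j \<and> j \<le> l then (Q j $ idx4 a $ idx4 b - (if a = b then csq j else 0)) / 2
     else if j = 0 \<and> 1 \<le> i \<and> i \<le> l then (Q i $ idx4 a $ idx4 b - (if a = b then csq i else 0)) / 2
     else 0)"
  using assms by (simp add: bigQ_def Let_def)

lemma obj_formula:
  fixes W :: "nat \<Rightarrow> nat \<Rightarrow> real"
  assumes sym: "\<forall>p<4*(l+1). \<forall>q<4*(l+1). W p q = W q p" and c: "constr l W"
  shows "objective l Q csq W = (\<Sum>j\<in>{1..l}.
     (\<Sum>a<4. \<Sum>b<4. Q j $ idx4 a $ idx4 b * W (4*j+a) (4*j+b))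
     - csq j * (\<Sum>a<4. W (4*j+a) (4*j+a)) + csq j)"
proof -
  define G where "G j a b = (Q j $ idx4 a $ idx4 b - (if a = b then csq j else 0)) / 2" for j a b
  define H where "H j = (\<Sum>a<4. \<Sum>b<4. G j a b * W (4*j+a) (4*j+b))" for j
  define T where "T i j = (\<Sum>a<4. \<Sum>b<4. bigQ l Q csq (4*i+a) (4*j+b) * W (4*j+b) (4*i+a))" for i j
  have cW: "W a (4*j+b) = W (4*j+a) (4*j+b)" if "j \<in> {1..l}" "a < 4" "b < 4" for j a b
    using c that unfolding constr_def by blast
  have lt: "4*j+a < 4*(l+1)" if "j \<le> l" "a < 4" for j a :: nat using that by (simp add: algebra_simps)
  have T0j: "T 0 j = H j" if "j \<in> {1..l}" for j
  proof -
    have "T 0 j = (\<Sum>a<4. \<Sum>b<4. G j a b * W (4*j+b) a)"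
      unfolding T_def using that by (intro sum.cong refl) (simp add: bigQ_val[of _ _ l Q csq 0, simplified] G_def)
    also have "\<dots> = H j" unfolding H_def
    proof (intro sum.cong refl)
      fix a b :: nat assume "a \<in> {..<4}" "b \<in> {..<4}"
      then have "W (4*j+b) a = W (4*j+a) (4*j+b)"
        using sym lt[of j b] lt[of 0 a] that cW[OF that, of a b] by auto
      then show "G j a b * W (4*j+b) a = G j a b * W (4*j+a) (4*j+b)" by simp
    qed
    finally show ?thesis .
  qed
  have Ti0: "T i 0 = H i" if "i \<in> {1..l}" for i
  proof -
    have "T i 0 = (\<Sum>a<4. \<Sum>b<4. G i a b * W b (4*i+a))"
      unfolding T_def using that by (intro sum.cong refl) (simp add: bigQ_val[of _ _ l Q csq _ 0, simplified] G_def)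
    also have "\<dots> = H i" unfolding H_def
    proof (intro sum.cong refl)
      fix a b :: nat assume "a \<in> {..<4}" "b \<in> {..<4}"
      then have "W b (4*i+a) = W (4*i+a) (4*i+b)"
        using sym lt[of i b] lt[of i a] that cW[OF that, of b a] by auto
      then show "G i a b * W b (4*i+a) = G i a b * W (4*i+a) (4*i+b)" by simp
    qed
    finally show ?thesis .
  qed
  have Tij: "T i j = 0" if "i \<in> {1..l}" "j \<in> {1..l}" for i j
    unfolding T_def using that by (intro sum.neutral ballI) (simp add: bigQ_val)
  have T00: "T 0 0 = 0"
    unfolding T_def by (intro sum.neutral ballI) (simp add: bigQ_val[of _ _ l Q csq 0 0, simplified])
  have U: "{..<l+1} = insert 0 {1..l}" by auto
  have "trprod l (bigQ l Q csq) W = (\<Sum>i<l+1. \<Sum>j<l+1. T i j)"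
    unfolding trprod_def sum_blocks2 T_def by simp
  also have "\<dots> = (\<Sum>j\<in>{1..l}. T 0 j) + (\<Sum>i\<in>{1..l}. T i 0 + (\<Sum>j\<in>{1..l}. T i j))"
    unfolding U by (simp add: T00)
  also have "\<dots> = (\<Sum>j\<in>{1..l}. 2 * H j)"
    using T0j Ti0 Tij by (simp add: sum.distrib sum_distrib_left)
  finally have tr: "trprod l (bigQ l Q csq) W = (\<Sum>j\<in>{1..l}. 2 * H j)" .
  have H2: "2 * H j = (\<Sum>a<4. \<Sum>b<4. Q j $ idx4 a $ idx4 b * W (4*j+a) (4*j+b))
     - csq j * (\<Sum>a<4. W (4*j+a) (4*j+a))" for j
  proof -
    have "2 * H j = (\<Sum>a<4. \<Sum>b<4. Q j $ idx4 a $ idx4 b * W (4*j+a) (4*j+b)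
       - (if a = b then csq j * W (4*j+a) (4*j+b) else 0))"
      unfolding H_def G_def sum_distrib_left by (intro sum.cong refl) (auto simp: field_simps)
    also have "\<dots> = (\<Sum>a<4. \<Sum>b<4. Q j $ idx4 a $ idx4 b * W (4*j+a) (4*j+b))
     - (\<Sum>a<4. csq j * W (4*j+a) (4*j+a))"
      by (simp add: sum_subtractf)
    finally show ?thesis by (simp add: sum_distrib_left)
  qed
  show ?thesis unfolding objective_def tr H2 by (simp add: sum.distrib)
qed

lemma psd_restrict:
  assumes "sym_psd l W" and S: "S \<subseteq> {..<4*(l+1)}"
  shows "0 \<le> (\<Sum>p\<in>S. \<Sum>q\<in>S. v p * W p q * v q)"
proof -
  define v' where "v' p = (if p \<in> S then v p else 0)" for p
  have "0 \<le> (\<Sum>p<4*(l+1). \<Sum>q<4*(l+1). v' p * W p q * v' q)"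
    using assms(1) unfolding sym_psd_def by blast
  also have "\<dots> = (\<Sum>p\<in>S. \<Sum>q<4*(l+1). v' p * W p q * v' q)"
    by (rule sum.mono_neutral_right) (use S in \<open>auto simp: v'_def\<close>)
  also have "\<dots> = (\<Sum>p\<in>S. \<Sum>q\<in>S. v' p * W p q * v' q)"
    by (intro sum.cong refl sum.mono_neutral_right) (use S in \<open>auto simp: v'_def\<close>)
  also have "\<dots> = (\<Sum>p\<in>S. \<Sum>q\<in>S. v p * W p q * v q)"
    by (intro sum.cong refl) (simp add: v'_def)
  finally show ?thesis .
qed

lemma psd_block:
  assumes "sym_psd l W" "j \<le> l"
  shows "0 \<le> (\<Sum>a<4. \<Sum>b<4. f a * W (4*j+a) (4*j+b) * f b)"
proof -
  let ?S = "(\<lambda>a. 4*j+a) ` {..<4::nat}"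
  have S: "?S \<subseteq> {..<4*(l+1)}" using assms(2) by auto
  have inj: "inj_on (\<lambda>a. 4*j+a) {..<4::nat}" by (auto simp: inj_on_def)
  have "0 \<le> (\<Sum>p\<in>?S. \<Sum>q\<in>?S. f (p - 4*j) * W p q * f (q - 4*j))"
    by (rule psd_restrict[OF assms(1) S])
  also have "\<dots> = (\<Sum>a<4. \<Sum>b<4. f a * W (4*j+a) (4*j+b) * f b)"
    by (simp add: sum.reindex[OF inj])
  finally show ?thesis .
qed

lemma psd_diag:
  assumes "sym_psd l W" "constr l W" "j \<in> {1..l}"
  shows "(\<Sum>a<4. W (4*j+a) (4*j+a)) \<le> 1"
proof -
  have "W (4*j+k) (4*j+k) \<le> W k k" if k: "k < 4" for k
  proof -
    have ne: "k \<noteq> 4*j+k" using assms(3) by auto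
    have S: "{k, 4*j+k} \<subseteq> {..<4*(l+1)}" using assms(3) k by auto
    define v where "v p = (if p = k then 1 else if p = 4*j+k then -1 else (0::real))" for p
    have "0 \<le> (\<Sum>p\<in>{k, 4*j+k}. \<Sum>q\<in>{k, 4*j+k}. v p * W p q * v q)"
      by (rule psd_restrict[OF assms(1) S])
    also have "\<dots> = W k k - W k (4*j+k) - W (4*j+k) k + W (4*j+k) (4*j+k)"
      using ne by (simp add: v_def)
    also have "W k (4*j+k) = W (4*j+k) (4*j+k)"
      using assms(2,3) k unfolding constr_def by blast
    also have "W (4*j+k) k = W k (4*j+k)"
      using assms(1) S unfolding sym_psd_def by auto
    also have "W k (4*j+k) = W (4*j+k) (4*j+k)"
      using assms(2,3) k unfolding constr_def by blast
    finally show ?thesis by simp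
  qed
  then have "(\<Sum>a<4. W (4*j+a) (4*j+a)) \<le> (\<Sum>a<4. W a a)"
    by (intro sum_mono) auto
  also have "\<dots> = 1" using assms(2) unfolding constr_def by blast
  finally show ?thesis .
qed

lemma sum4_idx: "(\<Sum>a<4. g (idx4 a)) = sum g (UNIV :: 4 set)" for g :: "4 \<Rightarrow> real"
  by (simp add: numeral_eq_Suc lessThan_Suc idx4_def sum_4)

lemma Qe_entry: "Qe x y $ i $ j = (\<Sum>k\<in>UNIV. Lm x y $ k $ i * Lm x y $ k $ j)"
  by (simp add: Qe_def matrix_matrix_mult_def transpose_def)

lemma Qe_trace_nonneg:
  assumes "sym_psd l W" "j \<le> l"
  shows "0 \<le> (\<Sum>a<4. \<Sum>b<4. Qe x y $ idx4 a $ idx4 b * W (4*j+a) (4*j+b))"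
proof -
  have "(\<Sum>a<4. \<Sum>b<4. Qe x y $ idx4 a $ idx4 b * W (4*j+a) (4*j+b))
     = (\<Sum>a<4. \<Sum>b<4. \<Sum>k\<in>UNIV. Lm x y $ k $ idx4 a * W (4*j+a) (4*j+b) * Lm x y $ k $ idx4 b)"
    unfolding Qe_entry sum_distrib_right by (intro sum.cong refl) (simp add: algebra_simps)
  also have "\<dots> = (\<Sum>k\<in>UNIV. \<Sum>a<4. \<Sum>b<4. Lm x y $ k $ idx4 a * W (4*j+a) (4*j+b) * Lm x y $ k $ idx4 b)"
    by (subst sum.swap, rule sum.cong[OF refl], rule sum.swap)
  also have "\<dots> \<ge> 0"
    by (intro sum_nonneg ballI psd_block[OF assms])
  finally show ?thesis by simp
qed

lemma quad_idx: "(\<Sum>a<4. \<Sum>b<4. Q $ idx4 a $ idx4 b * (w $ idx4 a * w $ idx4 b)) = w \<bullet> (Q *v w)"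
  for Q :: "real^4^4" and w :: "real^4"
proof -
  have "(\<Sum>a<4. \<Sum>b<4. Q $ idx4 a $ idx4 b * (w $ idx4 a * w $ idx4 b))
     = (\<Sum>a<4. (\<lambda>i. \<Sum>n\<in>UNIV. Q $ i $ n * (w $ i * w $ n)) (idx4 a))"
    using sum4_idx[of "\<lambda>n. Q $ idx4 _ $ n * (w $ idx4 _ * w $ n)"] by simp
  also have "\<dots> = (\<Sum>i\<in>UNIV. \<Sum>n\<in>UNIV. Q $ i $ n * (w $ i * w $ n))"
    by (rule sum4_idx)
  also have "\<dots> = w \<bullet> (Q *v w)"
    unfolding inner_vec_def matrix_vector_mult_def
    by (simp add: sum_distrib_left algebra_simps)
  finally show ?thesis .
qed

lemma gram_sym_psd: "sym_psd l (gram \<omega>)"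
  unfolding sym_psd_def gram_def
proof (intro conjI allI impI)
  fix v :: "nat \<Rightarrow> real"
  have "(\<Sum>p<4*(l+1). \<Sum>q<4*(l+1). v p * (\<omega> p * \<omega> q) * v q)
      = (\<Sum>p<4*(l+1). v p * \<omega> p) * (\<Sum>q<4*(l+1). v q * \<omega> q)"
    by (simp add: sum_product algebra_simps)
  also have "\<dots> \<ge> 0" by simp
  finally show "0 \<le> (\<Sum>p<4*(l+1). \<Sum>q<4*(l+1). v p * (\<omega> p * \<omega> q) * v q)" .
qed auto

theorem theorem3p1:
  fixes l :: nat and R0 :: "real^3^3" and w0 :: "real^4"
    and x y :: "nat \<Rightarrow> real^3" and csq :: "nat \<Rightarrow> real"
  assumes "orthogonal_matrix R0" and "det R0 = 1"
    and "norm w0 = 1" and "Rq w0 = R0"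
    and "\<forall>i\<in>{1..l}. y i = R0 *v x i"
    and "\<forall>i\<in>{1..l}. csq i \<ge> 0"
  shows "qcqp_global_min l (\<lambda>i. Qmat (x i) (y i)) csq (rep_quat l w0) \<and>
         sdr_global_min l (\<lambda>i. Qmat (x i) (y i)) csq (gram (rep_quat l w0)) \<and>
         sdr_tight l (\<lambda>i. Qmat (x i) (y i)) csq"
proof -
  let ?Q = "\<lambda>i. Qmat (x i) (y i)"
  let ?\<omega> = "rep_quat l w0"
  let ?W = "gram ?\<omega>"
  have rq: "?\<omega> (4*j+a) = w0 $ idx4 a" if "j \<le> l" "a < 4" for j a
    using that by (simp add: rep_quat_def algebra_simps)
  have rq0: "?\<omega> a = w0 $ idx4 a" if "a < 4" for a
    using rq[of 0 a] that by simp
  have nw: "(\<Sum>a<4. w0 $ idx4 a * w0 $ idx4 a) = 1"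
  proof -
    have "(\<Sum>a<4. w0 $ idx4 a * w0 $ idx4 a) = (\<Sum>i\<in>UNIV. w0 $ i * w0 $ i)"
      by (rule sum4_idx)
    also have "\<dots> = (norm w0)^2" by (simp add: power2_norm_eq_inner inner_vec_def)
    finally show ?thesis using assms(3) by simp
  qed
  have symW: "\<forall>p<4*(l+1). \<forall>q<4*(l+1). ?W p q = ?W q p" by (simp add: gram_def)
  have cW: "constr l ?W"
    unfolding constr_def gram_def
  proof (intro conjI ballI allI impI)
    fix i a b :: nat assume "i \<in> {1..l}" "a < 4" "b < 4"
    then show "?\<omega> a * ?\<omega> (4*i+b) = ?\<omega> (4*i+a) * ?\<omega> (4*i+b)"
      using rq rq0 by simp
  next
    show "(\<Sum>a<4. ?\<omega> a * ?\<omega> a) = 1" using nw rq0 by simp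
  qed
  have val: "objective l ?Q csq ?W = 0"
  proof -
    have "objective l ?Q csq ?W = (\<Sum>j\<in>{1..l}.
       (\<Sum>a<4. \<Sum>b<4. ?Q j $ idx4 a $ idx4 b * ?W (4*j+a) (4*j+b))
       - csq j * (\<Sum>a<4. ?W (4*j+a) (4*j+a)) + csq j)"
      by (rule obj_formula[OF symW cW])
    also have "\<dots> = (\<Sum>j\<in>{1..l}. 0)"
    proof (rule sum.cong[OF refl])
      fix j assume j: "j \<in> {1..l}"
      have e1: "(\<Sum>a<4. \<Sum>b<4. ?Q j $ idx4 a $ idx4 b * ?W (4*j+a) (4*j+b))
          = (\<Sum>a<4. \<Sum>b<4. ?Q j $ idx4 a $ idx4 b * (w0 $ idx4 a * w0 $ idx4 b))"
        using j rq by (intro sum.cong refl) (simp add: gram_def)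
      also have "\<dots> = w0 \<bullet> (?Q j *v w0)" by (rule quad_idx)
      also have "\<dots> = (norm (y j - Rq w0 *v x j))^2"
        unfolding Qmat_eq by (rule Qe_prop[OF assms(3)])
      also have "\<dots> = 0" using assms(4,5) j by simp
      finally have e1': "(\<Sum>a<4. \<Sum>b<4. ?Q j $ idx4 a $ idx4 b * ?W (4*j+a) (4*j+b)) = 0" .
      have e2: "(\<Sum>a<4. ?W (4*j+a) (4*j+a)) = 1"
        using j rq nw by (simp add: gram_def)
      show "(\<Sum>a<4. \<Sum>b<4. ?Q j $ idx4 a $ idx4 b * ?W (4*j+a) (4*j+b))
       - csq j * (\<Sum>a<4. ?W (4*j+a) (4*j+a)) + csq j = 0"
        using e1' e2 by simp
    qed
    finally show ?thesis by simp
  qed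
  have lb: "0 \<le> objective l ?Q csq W" if W: "sym_psd l W" "constr l W" for W
  proof -
    have symW': "\<forall>p<4*(l+1). \<forall>q<4*(l+1). W p q = W q p"
      using W(1) unfolding sym_psd_def by blast
    have "objective l ?Q csq W = (\<Sum>j\<in>{1..l}.
       (\<Sum>a<4. \<Sum>b<4. ?Q j $ idx4 a $ idx4 b * W (4*j+a) (4*j+b))
       - csq j * (\<Sum>a<4. W (4*j+a) (4*j+a)) + csq j)"
      by (rule obj_formula[OF symW' W(2)])
    also have "\<dots> \<ge> 0"
    proof (rule sum_nonneg)
      fix j assume j: "j \<in> {1..l}"
      have t1: "0 \<le> (\<Sum>a<4. \<Sum>b<4. ?Q j $ idx4 a $ idx4 b * W (4*j+a) (4*j+b))"
        unfolding Qmat_eq using Qe_trace_nonneg[OF W(1)] j by simp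
      have t2: "(\<Sum>a<4. W (4*j+a) (4*j+a)) \<le> 1" by (rule psd_diag[OF W j])
      have "0 \<le> csq j" using assms(6) j by blast
      then have "0 \<le> csq j * (1 - (\<Sum>a<4. W (4*j+a) (4*j+a)))" using t2 by simp
      then show "0 \<le> (\<Sum>a<4. \<Sum>b<4. ?Q j $ idx4 a $ idx4 b * W (4*j+a) (4*j+b))
       - csq j * (\<Sum>a<4. W (4*j+a) (4*j+a)) + csq j"
        using t1 by (simp add: algebra_simps)
    qed
    finally show ?thesis .
  qed
  have sdr: "sdr_global_min l ?Q csq ?W"
    unfolding sdr_global_min_def using gram_sym_psd cW val lb by auto
  have qcqp: "qcqp_global_min l ?Q csq ?\<omega>"
    unfolding qcqp_global_min_def using cW val lb gram_sym_psd by auto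
  show ?thesis using sdr qcqp unfolding sdr_tight_def by blast
qed

end
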